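(* Let $\mathbf{X},\mathbf{Y},\mathbf{Z}$ be finite non-empty sets and let $P$ be a positive probability measure on $\mathbf{X}\times\mathbf{Y}\times\mathbf{Z}$. Let $(X_n,Y_n,Z_n)$, $n=1,\dots,N$, be independent random elements of $\mathbf{X}\times\mathbf{Y}\times\mathbf{Z}$, each distributed according to $P$, with $N\ge1$ fixed. Fix $\delta>0$, $\tilde x\in\mathbf{X}$ and $y\in\mathbf{Y}$, and define the parameter \[ P(y\mid\mathrm{do}(\tilde x)):=\sum_{z\in\mathbf{Z}}P(Z=z\mid X=\tilde x)\sum_{x\in\mathbf{X}}P(Y=y\mid X=x,Z=z)\,P(X=x). \] Let $K:=|\mathbf{X}||\mathbf{Z}|+|\mathbf{X}|+|\mathbf{Z}|$, \[ m:=\sum_{z\in\mathbf{Z}}\hat p(z\mid\tilde x)\sum_{x\in\mathbf{X}}\hat p(y\mid x,z)\,\hat p(x), \] \[ h:=|\mathbf{X}||\mathbf{Z}|\sqrt{\frac{\ln\frac{2K}{\delta}}{2N}}+|\mathbf{X}||\mathbf{Z}|\sqrt{\frac{\ln\frac{2K}{\delta}}{2\,\#\tilde x}}+\sum_{x\in\mathbf{X},z\in\mathbf{Z}}\sqrt{\frac{\ln\frac{2K}{\delta}}{2\,\#xz}}, \] with $h:=\infty$ if any of the counts in the denominators is $0$. Then $\mathbb{P}\bigl(P(y\mid\mathrm{do}(\tilde x))\in[m-h,m+h]\bigr)\ge1-\delta$.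
   Context: Counting notation: $\#x:=|\{n\in[N]:X_n=x\}|$, $\#xz:=|\{n\in[N]:(X_n,Z_n)=(x,z)\}|$, $\#xyz:=|\{n\in[N]:(X_n,Y_n,Z_n)=(x,y,z)\}|$. Estimates: $\hat p(x):=\#x/N$, $\hat p(z\mid\tilde x):=\#\tilde x z/\#\tilde x$, $\hat p(y\mid x,z):=\#xyz/\#xz$. The parameter is the causal effect of $X$ on $Y$ when a set of variables $Z$ of a causal dag satisfies Pearl's front-door criterion relative to $(X,Y)$ ($Z$ may be a tuple of variables, $\mathbf{Z}$ the product of their domains); the claim concerns only the displayed quantity. *)

theory Defs
  imports "HOL-Probability.Probability"
begin

definition pX :: "('x \<times> 'y \<times> 'z) pmf \<Rightarrow> 'x \<Rightarrow> real" where
  "pX P x = measure_pmf.prob P {t. fst t = x}"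

definition pXZ :: "('x \<times> 'y \<times> 'z) pmf \<Rightarrow> 'x \<Rightarrow> 'z \<Rightarrow> real" where
  "pXZ P x z = measure_pmf.prob P {t. fst t = x \<and> snd (snd t) = z}"

definition pXYZ :: "('x \<times> 'y \<times> 'z) pmf \<Rightarrow> 'x \<Rightarrow> 'y \<Rightarrow> 'z \<Rightarrow> real" where
  "pXYZ P x y z = measure_pmf.prob P {(x, y, z)}"

definition frontdoor :: "('x::finite \<times> 'y \<times> 'z::finite) pmf \<Rightarrow> 'x \<Rightarrow> 'y \<Rightarrow> real" where
  "frontdoor P xt y =
     (\<Sum>z\<in>UNIV. (pXZ P xt z / pX P xt) *
        (\<Sum>x\<in>UNIV. (pXYZ P x y z / pXZ P x z) * pX P x))"

definition cntX :: "nat \<Rightarrow> (nat \<Rightarrow> 'x \<times> 'y \<times> 'z) \<Rightarrow> 'x \<Rightarrow> nat" where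
  "cntX N \<omega> x = card {n \<in> {1..N}. fst (\<omega> n) = x}"

definition cntXZ :: "nat \<Rightarrow> (nat \<Rightarrow> 'x \<times> 'y \<times> 'z) \<Rightarrow> 'x \<Rightarrow> 'z \<Rightarrow> nat" where
  "cntXZ N \<omega> x z = card {n \<in> {1..N}. fst (\<omega> n) = x \<and> snd (snd (\<omega> n)) = z}"

definition cntXYZ :: "nat \<Rightarrow> (nat \<Rightarrow> 'x \<times> 'y \<times> 'z) \<Rightarrow> 'x \<Rightarrow> 'y \<Rightarrow> 'z \<Rightarrow> nat" where
  "cntXYZ N \<omega> x y z = card {n \<in> {1..N}. \<omega> n = (x, y, z)}"

definition est_m :: "nat \<Rightarrow> (nat \<Rightarrow> 'x::finite \<times> 'y \<times> 'z::finite) \<Rightarrow> 'x \<Rightarrow> 'y \<Rightarrow> real" where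
  "est_m N \<omega> xt y =
     (\<Sum>z\<in>UNIV. (real (cntXZ N \<omega> xt z) / real (cntX N \<omega> xt)) *
        (\<Sum>x\<in>UNIV. (real (cntXYZ N \<omega> x y z) / real (cntXZ N \<omega> x z)) *
                    (real (cntX N \<omega> x) / real N)))"

definition hwidth :: "real \<Rightarrow> nat \<Rightarrow> (nat \<Rightarrow> 'x::finite \<times> 'y \<times> 'z::finite) \<Rightarrow> 'x \<Rightarrow> ereal" where
  "hwidth \<delta> N \<omega> xt =
     (let K = CARD('x) * CARD('z) + CARD('x) + CARD('z);
          L = ln (2 * real K / \<delta>)
      in if N = 0 \<or> cntX N \<omega> xt = 0 \<or> (\<exists>x z. cntXZ N \<omega> x z = 0) then \<infinity>
         else ereal (real (CARD('x) * CARD('z)) * sqrt (L / (2 * real N))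
                   + real (CARD('x) * CARD('z)) * sqrt (L / (2 * real (cntX N \<omega> xt)))
                   + (\<Sum>(x, z)\<in>UNIV. sqrt (L / (2 * real (cntXZ N \<omega> x z))))))"

end

theory Submission
  imports Defs
begin

lemma binom_bound:
  fixes S I :: "nat set" and q L :: real
  assumes fin: "finite I" and SI: "S \<subseteq> I" and Sne: "S \<noteq> {}"
    and q: "0 \<le> q" "q \<le> 1" and L: "L \<ge> 0"
  shows "measure_pmf.prob (Pi_pmf I False (\<lambda>_. bernoulli_pmf q))
     {g. sqrt (L / (2 * real (card S))) < \<bar>real (card {i\<in>S. g i}) / real (card S) - q\<bar>} \<le> 2 * exp (-L)"
proof -
  have finS: "finite S" using fin SI finite_subset by blast
  have cS: "card S > 0" using finS Sne by (simp add: card_gt_0_iff)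
  have "binomial_pmf (card S) q = map_pmf (\<lambda>f. card {x\<in>S. f x}) (Pi_pmf S False (\<lambda>_. bernoulli_pmf q))"
    by (rule binomial_pmf_altdef') (use finS q in auto)
  also have "Pi_pmf S False (\<lambda>_. bernoulli_pmf q) = map_pmf (\<lambda>f x. if x \<in> S then f x else False) (Pi_pmf I False (\<lambda>_. bernoulli_pmf q))"
    by (rule Pi_pmf_subset) (use fin SI in auto)
  finally have eq: "binomial_pmf (card S) q = map_pmf (\<lambda>g. card {i\<in>S. g i}) (Pi_pmf I False (\<lambda>_. bernoulli_pmf q))"
    by (simp add: map_pmf_comp cong: conj_cong)
  define \<epsilon> where "\<epsilon> = sqrt (L / (2 * real (card S)))"
  have e0: "\<epsilon> \<ge> 0" using L by (simp add: \<epsilon>_def)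
  interpret binomial_distribution "card S" q by unfold_locales (use q in auto)
  have "measure_pmf.prob (Pi_pmf I False (\<lambda>_. bernoulli_pmf q))
     {g. \<epsilon> < \<bar>real (card {i\<in>S. g i}) / real (card S) - q\<bar>}
     = measure_pmf.prob (binomial_pmf (card S) q) {k. \<epsilon> < \<bar>real k / real (card S) - q\<bar>}"
    by (simp add: eq vimage_def)
  also have "\<dots> \<le> measure_pmf.prob (binomial_pmf (card S) q) {k. \<bar>real k / real (card S) - q\<bar> \<ge> \<epsilon>}"
    by (intro measure_pmf.finite_measure_mono) auto
  also have "\<dots> \<le> 2 * exp (-2 * real (card S) * \<epsilon>\<^sup>2)"
    using prob_abs_ge'[OF cS e0] by simp
  also have "-2 * real (card S) * \<epsilon>\<^sup>2 = -L"
    using cS L by (simp add: \<epsilon>_def)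
  finally show ?thesis by (simp add: \<epsilon>_def)
qed

lemma mapQ:
  fixes Q :: "'a pmf" and A B :: "'a set"
  assumes pA: "measure_pmf.prob Q A > 0"
  defines "pa \<equiv> measure_pmf.prob Q A"
  defines "q \<equiv> measure_pmf.prob Q (A \<inter> B) / pa"
  shows "map_pmf (\<lambda>y. (y \<in> A, y \<in> A \<inter> B)) Q =
     bind_pmf (bernoulli_pmf pa) (\<lambda>c. map_pmf (\<lambda>b. (c, c \<and> b)) (bernoulli_pmf q))"
proof (rule pmf_eqI)
  fix ab :: "bool \<times> bool"
  obtain a b where ab: "ab = (a,b)" by (cases ab)
  have pa01: "0 \<le> pa" "pa \<le> 1" by (simp_all add: pa_def)
  have ABle: "measure_pmf.prob Q (A \<inter> B) \<le> pa"
    unfolding pa_def by (intro measure_pmf.finite_measure_mono) auto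
  have q01: "0 \<le> q" "q \<le> 1" using pA ABle by (simp_all add: q_def pa_def)
  have paq: "pa * q = measure_pmf.prob Q (A \<inter> B)" using pA by (simp add: q_def pa_def)
  have diff: "measure_pmf.prob Q (A - B) = pa - measure_pmf.prob Q (A \<inter> B)"
  proof -
    have "A - B = A - (A \<inter> B)" by auto
    then show ?thesis unfolding pa_def
      by (simp add: measure_pmf.finite_measure_Diff)
  qed
  have compl: "measure_pmf.prob Q (- A) = 1 - pa"
    unfolding pa_def using measure_pmf.prob_compl[of A Q] by (simp add: Compl_eq_Diff_UNIV)
  let ?L = "map_pmf (\<lambda>y. (y \<in> A, y \<in> A \<inter> B)) Q"
  let ?R = "bind_pmf (bernoulli_pmf pa) (\<lambda>c. map_pmf (\<lambda>b. (c, c \<and> b)) (bernoulli_pmf q))"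
  have TT: "pmf ?L (True, True) = pmf ?R (True, True)"
  proof -
    have "(\<lambda>y. (y \<in> A, y \<in> A \<inter> B)) -` {(True,True)} = A \<inter> B" by auto
    moreover have "(\<lambda>b. (True, b)) -` {(True,True)} = {True}" by auto
    moreover have "(\<lambda>b. (False, False)) -` {(True,True)} = {}" by auto
    ultimately show ?thesis using pa01 q01 paq
      by (simp add: pmf_map pmf_bind measure_pmf_single mult.commute del: vimage_Collect_eq)
  qed
  have TF: "pmf ?L (True, False) = pmf ?R (True, False)"
  proof -
    have "(\<lambda>y. (y \<in> A, y \<in> A \<inter> B)) -` {(True,False)} = A - B" by auto
    moreover have "(\<lambda>b. (True, b)) -` {(True,False)} = {False}" by auto
    moreover have "(\<lambda>b. (False, False)) -` {(True,False)} = {}" by auto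
    ultimately show ?thesis using pa01 q01 paq diff
      by (simp add: pmf_map pmf_bind measure_pmf_single algebra_simps del: vimage_Collect_eq)
  qed
  have FT: "pmf ?L (False, True) = pmf ?R (False, True)"
  proof -
    have "(\<lambda>y. (y \<in> A, y \<in> A \<inter> B)) -` {(False,True)} = {}" by auto
    moreover have "(\<lambda>b. (True, b)) -` {(False,True)} = {}" by auto
    moreover have "(\<lambda>b. (False, False)) -` {(False,True)} = {}" by auto
    ultimately show ?thesis using pa01 q01
      by (simp add: pmf_map pmf_bind del: vimage_Collect_eq)
  qed
  have FF: "pmf ?L (False, False) = pmf ?R (False, False)"
  proof -
    have "(\<lambda>y. (y \<in> A, y \<in> A \<inter> B)) -` {(False,False)} = - A" by auto
    moreover have "(\<lambda>b. (True, b)) -` {(False,False)} = {}" by auto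
    moreover have "(\<lambda>b. (False, False)) -` {(False,False)} = UNIV" by auto
    ultimately show ?thesis using pa01 q01 compl
      by (simp add: pmf_map pmf_bind del: vimage_Collect_eq)
  qed
  show "pmf ?L ab = pmf ?R ab"
    using TT TF FT FF by (cases ab; cases "fst ab"; cases "snd ab") auto
qed

lemma Pi_map_dep:
  assumes fin: "finite I"
  shows "Pi_pmf I dd (\<lambda>x. map_pmf (f x) p) =
         map_pmf (\<lambda>g x. if x \<in> I then f x (g x) else dd) (Pi_pmf I d' (\<lambda>_. p))"
proof -
  have "Pi_pmf I dd (\<lambda>x. map_pmf (f x) p) = Pi_pmf I dd (\<lambda>x. bind_pmf p (\<lambda>b. return_pmf (f x b)))"
    by (simp add: map_pmf_def)
  also have "\<dots> = bind_pmf (Pi_pmf I d' (\<lambda>_. p)) (\<lambda>g. Pi_pmf I dd (\<lambda>x. return_pmf (f x (g x))))"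
    by (rule Pi_pmf_bind[OF fin])
  also have "\<dots> = bind_pmf (Pi_pmf I d' (\<lambda>_. p)) (\<lambda>g. return_pmf (\<lambda>x. if x \<in> I then f x (g x) else dd))"
    using fin by simp
  finally show ?thesis by (simp add: map_pmf_def)
qed

lemma key:
  fixes Q :: "'a pmf" and A B :: "'a set" and I :: "nat set" and L :: real and d :: 'a
  assumes fin: "finite I" and pA: "measure_pmf.prob Q A > 0" and L: "L \<ge> 0"
  defines "q \<equiv> measure_pmf.prob Q (A \<inter> B) / measure_pmf.prob Q A"
  shows "measure_pmf.prob (Pi_pmf I d (\<lambda>_. Q))
     {\<omega>. card {n\<in>I. \<omega> n \<in> A} > 0 \<and>
          sqrt (L / (2 * real (card {n\<in>I. \<omega> n \<in> A}))) <
          \<bar>real (card {n\<in>I. \<omega> n \<in> A \<inter> B}) / real (card {n\<in>I. \<omega> n \<in> A}) - q\<bar>} \<le> 2 * exp (-L)"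
proof -
  define pa where "pa = measure_pmf.prob Q A"
  have ABle: "measure_pmf.prob Q (A \<inter> B) \<le> pa"
    unfolding pa_def by (intro measure_pmf.finite_measure_mono) auto
  have q01: "0 \<le> q" "q \<le> 1" using pA ABle by (simp_all add: q_def pa_def)
  have pa01: "0 \<le> pa" "pa \<le> 1" by (simp_all add: pa_def)
  define bad :: "(nat \<Rightarrow> bool \<times> bool) set" where
    "bad = {h. card {n\<in>I. fst (h n)} > 0 \<and> sqrt (L / (2 * real (card {n\<in>I. fst (h n)}))) <
       \<bar>real (card {n\<in>I. fst (h n) \<and> snd (h n)}) / real (card {n\<in>I. fst (h n)}) - q\<bar>}"
  define \<phi> where "\<phi> = (\<lambda>y. (y \<in> A, y \<in> A \<inter> B))"
  define R where "R = bind_pmf (bernoulli_pmf pa) (\<lambda>c. map_pmf (\<lambda>b. (c, c \<and> b)) (bernoulli_pmf q))"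
  have mQ: "map_pmf \<phi> Q = R"
    unfolding \<phi>_def R_def pa_def q_def by (rule mapQ[OF pA])
  define G where "G = (\<lambda>(c::nat \<Rightarrow> bool) (g::nat \<Rightarrow> bool) x. if x \<in> I then (c x, c x \<and> g x) else \<phi> d)"
  have "{\<omega>. card {n\<in>I. \<omega> n \<in> A} > 0 \<and>
          sqrt (L / (2 * real (card {n\<in>I. \<omega> n \<in> A}))) <
          \<bar>real (card {n\<in>I. \<omega> n \<in> A \<inter> B}) / real (card {n\<in>I. \<omega> n \<in> A}) - q\<bar>}
       = (\<lambda>\<omega>. \<phi> \<circ> \<omega>) -` bad"
    by (simp add: bad_def \<phi>_def)
  then have "measure_pmf.prob (Pi_pmf I d (\<lambda>_. Q))
     {\<omega>. card {n\<in>I. \<omega> n \<in> A} > 0 \<and>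
          sqrt (L / (2 * real (card {n\<in>I. \<omega> n \<in> A}))) <
          \<bar>real (card {n\<in>I. \<omega> n \<in> A \<inter> B}) / real (card {n\<in>I. \<omega> n \<in> A}) - q\<bar>}
     = measure_pmf.prob (map_pmf (\<lambda>\<omega>. \<phi> \<circ> \<omega>) (Pi_pmf I d (\<lambda>_. Q))) bad"
    by simp
  also have "map_pmf (\<lambda>\<omega>. \<phi> \<circ> \<omega>) (Pi_pmf I d (\<lambda>_. Q)) = Pi_pmf I (\<phi> d) (\<lambda>_. map_pmf \<phi> Q)"
    by (rule Pi_pmf_map[symmetric]) (use fin in auto)
  also have "\<dots> = Pi_pmf I (\<phi> d) (\<lambda>_. R)" by (simp add: mQ)
  also have "\<dots> = bind_pmf (Pi_pmf I False (\<lambda>_. bernoulli_pmf pa))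
      (\<lambda>c. Pi_pmf I (\<phi> d) (\<lambda>x. map_pmf (\<lambda>b. (c x, c x \<and> b)) (bernoulli_pmf q)))"
    unfolding R_def by (rule Pi_pmf_bind[OF fin])
  also have "\<dots> = bind_pmf (Pi_pmf I False (\<lambda>_. bernoulli_pmf pa))
      (\<lambda>c. map_pmf (G c) (Pi_pmf I False (\<lambda>_. bernoulli_pmf q)))"
    unfolding G_def by (intro bind_pmf_cong refl Pi_map_dep fin)
  finally have eq: "measure_pmf.prob (Pi_pmf I d (\<lambda>_. Q))
     {\<omega>. card {n\<in>I. \<omega> n \<in> A} > 0 \<and>
          sqrt (L / (2 * real (card {n\<in>I. \<omega> n \<in> A}))) <
          \<bar>real (card {n\<in>I. \<omega> n \<in> A \<inter> B}) / real (card {n\<in>I. \<omega> n \<in> A}) - q\<bar>}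
     = measure_pmf.prob (bind_pmf (Pi_pmf I False (\<lambda>_. bernoulli_pmf pa))
      (\<lambda>c. map_pmf (G c) (Pi_pmf I False (\<lambda>_. bernoulli_pmf q)))) bad" .
  have inner: "measure_pmf.prob (map_pmf (G c) (Pi_pmf I False (\<lambda>_. bernoulli_pmf q))) bad \<le> 2 * exp (-L)"
    for c
  proof -
    define S where "S = {i\<in>I. c i}"
    have c1: "card {n\<in>I. fst (G c g n)} = card S" for g
      unfolding G_def S_def by (intro arg_cong[where f=card]) auto
    have c2: "card {n\<in>I. fst (G c g n) \<and> snd (G c g n)} = card {i\<in>S. g i}" for g
      unfolding G_def S_def by (intro arg_cong[where f=card]) auto
    show ?thesis
    proof (cases "S = {}")
      case True
      then have "G c -` bad = {}" unfolding bad_def by (auto simp: c1)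
      then show ?thesis by simp
    next
      case False
      have "G c -` bad = {g. sqrt (L / (2 * real (card S))) < \<bar>real (card {i\<in>S. g i}) / real (card S) - q\<bar>}"
        proof -
        have "card S > 0" using False fin by (simp add: S_def card_gt_0_iff)
        then show ?thesis unfolding bad_def by (simp add: c1 c2)
      qed
      then have "measure_pmf.prob (map_pmf (G c) (Pi_pmf I False (\<lambda>_. bernoulli_pmf q))) bad =
         measure_pmf.prob (Pi_pmf I False (\<lambda>_. bernoulli_pmf q))
           {g. sqrt (L / (2 * real (card S))) < \<bar>real (card {i\<in>S. g i}) / real (card S) - q\<bar>}"
        by simp
      also have "\<dots> \<le> 2 * exp (-L)"
        by (rule binom_bound) (use fin False q01 L in \<open>auto simp: S_def\<close>)
      finally show ?thesis .
    qed
  qed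
  have "emeasure (measure_pmf (bind_pmf (Pi_pmf I False (\<lambda>_. bernoulli_pmf pa))
      (\<lambda>c. map_pmf (G c) (Pi_pmf I False (\<lambda>_. bernoulli_pmf q))))) bad
     = (\<integral>\<^sup>+c. emeasure (measure_pmf (map_pmf (G c) (Pi_pmf I False (\<lambda>_. bernoulli_pmf q)))) bad
          \<partial>measure_pmf (Pi_pmf I False (\<lambda>_. bernoulli_pmf pa)))"
    by (rule emeasure_bind_pmf)
  also have "\<dots> \<le> (\<integral>\<^sup>+c. ennreal (2 * exp (-L)) \<partial>measure_pmf (Pi_pmf I False (\<lambda>_. bernoulli_pmf pa)))"
    using inner by (intro nn_integral_mono) (simp add: measure_pmf.emeasure_eq_measure del: measure_map_pmf)
  also have "\<dots> = ennreal (2 * exp (-L))" by simp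
  finally have "measure_pmf.prob (bind_pmf (Pi_pmf I False (\<lambda>_. bernoulli_pmf pa))
      (\<lambda>c. map_pmf (G c) (Pi_pmf I False (\<lambda>_. bernoulli_pmf q)))) bad \<le> 2 * exp (-L)"
    by (simp add: measure_pmf.emeasure_eq_measure)
  then show ?thesis using eq by simp
qed

lemma prod_err:
  fixes a b c a' b' c' :: real
  assumes "0 \<le> a" "a \<le> 1" "0 \<le> b" "b \<le> 1" "0 \<le> c" "c \<le> 1"
    "0 \<le> a'" "a' \<le> 1" "0 \<le> b'" "b' \<le> 1" "0 \<le> c'" "c' \<le> 1"
  shows "\<bar>a' * (b' * c') - a * (b * c)\<bar> \<le> \<bar>a' - a\<bar> + \<bar>b' - b\<bar> + \<bar>c' - c\<bar>"
proof -
  have eq: "a' * (b' * c') - a * (b * c) = (a' - a) * (b' * c') + a * ((b' - b) * c') + a * b * (c' - c)"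
    by (simp add: algebra_simps)
  have 1: "\<bar>(a' - a) * (b' * c')\<bar> \<le> \<bar>a' - a\<bar>"
  proof -
    have "\<bar>b' * c'\<bar> \<le> 1" using assms by (simp add: abs_mult mult_le_one)
    then show ?thesis by (simp add: abs_mult mult_left_le)
  qed
  have 2: "\<bar>a * ((b' - b) * c')\<bar> \<le> \<bar>b' - b\<bar>"
  proof -
    have "\<bar>a * c'\<bar> \<le> 1" using assms by (simp add: abs_mult mult_le_one)
    then have "\<bar>b' - b\<bar> * \<bar>a * c'\<bar> \<le> \<bar>b' - b\<bar>" by (simp add: mult_left_le)
    moreover have "\<bar>a * ((b' - b) * c')\<bar> = \<bar>b' - b\<bar> * \<bar>a * c'\<bar>" by (simp add: abs_mult)
    ultimately show ?thesis by simp
  qed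
  have 3: "\<bar>a * b * (c' - c)\<bar> \<le> \<bar>c' - c\<bar>"
  proof -
    have "\<bar>a * b\<bar> \<le> 1" using assms by (simp add: abs_mult mult_le_one)
    then have "\<bar>c' - c\<bar> * \<bar>a * b\<bar> \<le> \<bar>c' - c\<bar>" by (simp add: mult_left_le)
    moreover have "\<bar>a * b * (c' - c)\<bar> = \<bar>c' - c\<bar> * \<bar>a * b\<bar>" by (simp add: abs_mult)
    ultimately show ?thesis by simp
  qed
  show ?thesis unfolding eq using 1 2 3 abs_triangle_ineq order_trans
    by (smt (verit))
qed

lemma sum_err:
  fixes ah a :: "'z::finite \<Rightarrow> real" and bh b e :: "'x::finite \<Rightarrow> 'z \<Rightarrow> real" and ch c :: "'x \<Rightarrow> real"
  assumes r: "\<And>z. 0 \<le> a z \<and> a z \<le> 1 \<and> 0 \<le> ah z \<and> ah z \<le> 1"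
    "\<And>x z. 0 \<le> b x z \<and> b x z \<le> 1 \<and> 0 \<le> bh x z \<and> bh x z \<le> 1"
    "\<And>x. 0 \<le> c x \<and> c x \<le> 1 \<and> 0 \<le> ch x \<and> ch x \<le> 1"
  and ea: "\<And>z. \<bar>ah z - a z\<bar> \<le> ea"
  and eb: "\<And>x z. \<bar>bh x z - b x z\<bar> \<le> e x z"
  and ec: "\<And>x. \<bar>ch x - c x\<bar> \<le> eN"
  shows "\<bar>(\<Sum>z\<in>UNIV. ah z * (\<Sum>x\<in>UNIV. bh x z * ch x)) - (\<Sum>z\<in>UNIV. a z * (\<Sum>x\<in>UNIV. b x z * c x))\<bar>
     \<le> real (CARD('x) * CARD('z)) * eN + real (CARD('x) * CARD('z)) * ea + (\<Sum>(x, z)\<in>UNIV. e x z)"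
proof -
  have "(\<Sum>z\<in>UNIV. ah z * (\<Sum>x\<in>UNIV. bh x z * ch x)) - (\<Sum>z\<in>UNIV. a z * (\<Sum>x\<in>UNIV. b x z * c x))
     = (\<Sum>z\<in>UNIV. \<Sum>x\<in>UNIV. ah z * (bh x z * ch x) - a z * (b x z * c x))"
    by (simp add: sum_distrib_left sum_subtractf)
  also have "\<bar>\<dots>\<bar> \<le> (\<Sum>z\<in>UNIV. \<Sum>x\<in>UNIV. \<bar>ah z * (bh x z * ch x) - a z * (b x z * c x)\<bar>)"
    by (rule order_trans[OF sum_abs sum_mono]) (rule sum_abs)
  also have "\<dots> \<le> (\<Sum>z\<in>UNIV. \<Sum>x\<in>UNIV. ea + e x z + eN)"
  proof (intro sum_mono)
    fix z x
    have "\<bar>ah z * (bh x z * ch x) - a z * (b x z * c x)\<bar> \<le> \<bar>ah z - a z\<bar> + \<bar>bh x z - b x z\<bar> + \<bar>ch x - c x\<bar>"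
      using r(1)[of z] r(2)[of x z] r(3)[of x] by (intro prod_err) auto
    also have "\<dots> \<le> ea + e x z + eN" using ea[of z] eb[of x z] ec[of x] by linarith
    finally show "\<bar>ah z * (bh x z * ch x) - a z * (b x z * c x)\<bar> \<le> ea + e x z + eN" .
  qed
  also have "\<dots> = real (CARD('x) * CARD('z)) * eN + real (CARD('x) * CARD('z)) * ea + (\<Sum>z\<in>UNIV. \<Sum>x\<in>UNIV. e x z)"
    by (simp add: sum.distrib algebra_simps)
  also have "(\<Sum>z\<in>UNIV. \<Sum>x\<in>UNIV. e x z) = (\<Sum>(x, z)\<in>UNIV. e x z)"
    by (subst sum.swap) (simp add: sum.cartesian_product)
  finally show ?thesis .
qed

lemma ratio01:
  fixes a b :: real
  assumes "0 \<le> a" "a \<le> b"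
  shows "0 \<le> a / b \<and> a / b \<le> 1"
  using assms by (cases "b = 0") (auto simp: divide_le_eq_1)

lemma cnt_facts:
  "cntXZ N \<omega> x z \<le> cntX N \<omega> x" "cntXYZ N \<omega> x y z \<le> cntXZ N \<omega> x z" "cntX N \<omega> x \<le> N"
proof -
  show "cntXZ N \<omega> x z \<le> cntX N \<omega> x" unfolding cntXZ_def cntX_def
    by (intro card_mono) auto
  show "cntXYZ N \<omega> x y z \<le> cntXZ N \<omega> x z" unfolding cntXYZ_def cntXZ_def
    by (intro card_mono) auto
  have "cntX N \<omega> x \<le> card {1..N}" unfolding cntX_def by (intro card_mono) auto
  then show "cntX N \<omega> x \<le> N" by simp
qed

lemma pop_facts:
  "pXZ P x z \<le> pX P x" "pXYZ P x y z \<le> pXZ P x z" "0 \<le> pXYZ P x y z" "pX P x \<le> 1" "0 \<le> pX P x"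
proof -
  show "pXZ P x z \<le> pX P x" unfolding pXZ_def pX_def
    by (intro measure_pmf.finite_measure_mono) auto
  show "pXYZ P x y z \<le> pXZ P x z" unfolding pXYZ_def pXZ_def
    by (intro measure_pmf.finite_measure_mono) auto
qed (simp_all add: pXYZ_def pX_def)

lemma prob_pos:
  fixes P :: "'a pmf"
  assumes "\<And>t. pmf P t > 0" "t \<in> A"
  shows "measure_pmf.prob P A > 0"
proof -
  have "measure_pmf.prob P {t} \<le> measure_pmf.prob P A"
    using assms by (intro measure_pmf.finite_measure_mono) auto
  moreover have "measure_pmf.prob P {t} > 0" using assms by (simp add: measure_pmf_single)
  ultimately show ?thesis by linarith
qed

theorem theorem2:
  fixes P :: "('x::finite \<times> 'y::finite \<times> 'z::finite) pmf"
    and N :: nat and \<delta> :: real and xt :: 'x and y :: 'y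
  assumes pos: "\<And>t. pmf P t > 0"
    and N: "N \<ge> 1"
    and \<delta>: "\<delta> > 0"
  shows "measure_pmf.prob (Pi_pmf {1..N} undefined (\<lambda>_. P))
           {\<omega>. ereal (est_m N \<omega> xt y) - hwidth \<delta> N \<omega> xt \<le> ereal (frontdoor P xt y)
              \<and> ereal (frontdoor P xt y) \<le> ereal (est_m N \<omega> xt y) + hwidth \<delta> N \<omega> xt}
         \<ge> 1 - \<delta>"
proof (cases "\<delta> \<ge> 1")
  case True
  then show ?thesis by (simp add: measure_nonneg order_trans[of _ 0])
next
  case False
  define M where "M = Pi_pmf {1..N} undefined (\<lambda>_. P)"
  define G where "G = {\<omega>::nat \<Rightarrow> 'x \<times> 'y \<times> 'z. ereal (est_m N \<omega> xt y) - hwidth \<delta> N \<omega> xt \<le> ereal (frontdoor P xt y)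
              \<and> ereal (frontdoor P xt y) \<le> ereal (est_m N \<omega> xt y) + hwidth \<delta> N \<omega> xt}"
  define K :: nat where "K = CARD('x) * CARD('z) + CARD('x) + CARD('z)"
  define L where "L = ln (2 * real K / \<delta>)"
  have K3: "K \<ge> 3"
  proof -
    have cx: "CARD('x) \<ge> 1" "CARD('z) \<ge> 1" by (simp_all add: Suc_le_eq)
    have "CARD('x) * CARD('z) \<ge> 1" using cx by (metis mult_le_mono nat_mult_1)
    then show ?thesis unfolding K_def using cx by linarith
  qed
  have KD: "2 * real K / \<delta> > 1" using K3 \<delta> False by (simp add: field_simps)
  have L0: "L > 0" unfolding L_def using KD by simp
  have expL: "exp (-L) = \<delta> / (2 * real K)"
    unfolding L_def using KD \<delta> by (simp add: exp_minus exp_ln)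
  define E1 where "E1 = (\<lambda>x. {\<omega>::nat \<Rightarrow> 'x \<times> 'y \<times> 'z. sqrt (L / (2 * real N)) < \<bar>real (cntX N \<omega> x) / real N - pX P x\<bar>})"
  define E2 where "E2 = (\<lambda>z. {\<omega>::nat \<Rightarrow> 'x \<times> 'y \<times> 'z. cntX N \<omega> xt > 0 \<and> sqrt (L / (2 * real (cntX N \<omega> xt))) <
      \<bar>real (cntXZ N \<omega> xt z) / real (cntX N \<omega> xt) - pXZ P xt z / pX P xt\<bar>})"
  define E3 where "E3 = (\<lambda>(x, z). {\<omega>::nat \<Rightarrow> 'x \<times> 'y \<times> 'z. cntXZ N \<omega> x z > 0 \<and> sqrt (L / (2 * real (cntXZ N \<omega> x z))) <
      \<bar>real (cntXYZ N \<omega> x y z) / real (cntXZ N \<omega> x z) - pXYZ P x y z / pXZ P x z\<bar>})"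
  have P1: "measure_pmf.prob M (E1 x) \<le> 2 * exp (-L)" for x
  proof -
    have "E1 x \<subseteq> {\<omega>. card {n\<in>{1..N}. \<omega> n \<in> UNIV} > 0 \<and>
          sqrt (L / (2 * real (card {n\<in>{1..N}. \<omega> n \<in> UNIV}))) <
          \<bar>real (card {n\<in>{1..N}. \<omega> n \<in> UNIV \<inter> {t. fst t = x}}) / real (card {n\<in>{1..N}. \<omega> n \<in> UNIV})
            - measure_pmf.prob P (UNIV \<inter> {t. fst t = x}) / measure_pmf.prob P UNIV\<bar>}"
    proof -
      have "{n. Suc 0 \<le> n \<and> n \<le> N} = {1..N}" by auto
      then have cN: "card {n. Suc 0 \<le> n \<and> n \<le> N} = N" by simp
      show ?thesis using N unfolding E1_def cntX_def pX_def by (auto simp: cN)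
    qed
    then have "measure_pmf.prob M (E1 x) \<le> measure_pmf.prob M {\<omega>. card {n\<in>{1..N}. \<omega> n \<in> UNIV} > 0 \<and>
          sqrt (L / (2 * real (card {n\<in>{1..N}. \<omega> n \<in> UNIV}))) <
          \<bar>real (card {n\<in>{1..N}. \<omega> n \<in> UNIV \<inter> {t. fst t = x}}) / real (card {n\<in>{1..N}. \<omega> n \<in> UNIV})
            - measure_pmf.prob P (UNIV \<inter> {t. fst t = x}) / measure_pmf.prob P UNIV\<bar>}"
      by (rule measure_pmf.finite_measure_mono) auto
    also have "\<dots> \<le> 2 * exp (-L)"
      unfolding M_def by (rule key) (use L0 prob_pos[OF pos, of "(x, y, undefined)"] in auto)
    finally show ?thesis .
  qed
  have P2: "measure_pmf.prob M (E2 z) \<le> 2 * exp (-L)" for z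
  proof -
    have AB: "{t::'x\<times>'y\<times>'z. fst t = xt} \<inter> {t. snd (snd t) = z} = {t. fst t = xt \<and> snd (snd t) = z}" by auto
    have "E2 z \<subseteq> {\<omega>. card {n\<in>{1..N}. \<omega> n \<in> {t. fst t = xt}} > 0 \<and>
          sqrt (L / (2 * real (card {n\<in>{1..N}. \<omega> n \<in> {t. fst t = xt}}))) <
          \<bar>real (card {n\<in>{1..N}. \<omega> n \<in> {t. fst t = xt} \<inter> {t. snd (snd t) = z}}) / real (card {n\<in>{1..N}. \<omega> n \<in> {t. fst t = xt}})
            - measure_pmf.prob P ({t. fst t = xt} \<inter> {t. snd (snd t) = z}) / measure_pmf.prob P {t. fst t = xt}\<bar>}"
      unfolding E2_def cntX_def cntXZ_def pX_def pXZ_def AB by auto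
    then have "measure_pmf.prob M (E2 z) \<le> measure_pmf.prob M {\<omega>. card {n\<in>{1..N}. \<omega> n \<in> {t. fst t = xt}} > 0 \<and>
          sqrt (L / (2 * real (card {n\<in>{1..N}. \<omega> n \<in> {t. fst t = xt}}))) <
          \<bar>real (card {n\<in>{1..N}. \<omega> n \<in> {t. fst t = xt} \<inter> {t. snd (snd t) = z}}) / real (card {n\<in>{1..N}. \<omega> n \<in> {t. fst t = xt}})
            - measure_pmf.prob P ({t. fst t = xt} \<inter> {t. snd (snd t) = z}) / measure_pmf.prob P {t. fst t = xt}\<bar>}"
      by (rule measure_pmf.finite_measure_mono) auto
    also have "\<dots> \<le> 2 * exp (-L)"
      unfolding M_def by (rule key) (use L0 prob_pos[OF pos, of "(xt, y, z)"] in auto)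
    finally show ?thesis .
  qed
  have P3: "measure_pmf.prob M (E3 p) \<le> 2 * exp (-L)" for p
  proof -
    obtain x z where p: "p = (x, z)" by (cases p)
    have AB: "{t::'x\<times>'y\<times>'z. fst t = x \<and> snd (snd t) = z} \<inter> {t. fst (snd t) = y} = {(x, y, z)}" by auto
    have "E3 p \<subseteq> {\<omega>. card {n\<in>{1..N}. \<omega> n \<in> {t. fst t = x \<and> snd (snd t) = z}} > 0 \<and>
          sqrt (L / (2 * real (card {n\<in>{1..N}. \<omega> n \<in> {t. fst t = x \<and> snd (snd t) = z}}))) <
          \<bar>real (card {n\<in>{1..N}. \<omega> n \<in> {t. fst t = x \<and> snd (snd t) = z} \<inter> {t. fst (snd t) = y}}) / real (card {n\<in>{1..N}. \<omega> n \<in> {t. fst t = x \<and> snd (snd t) = z}})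
            - measure_pmf.prob P ({t. fst t = x \<and> snd (snd t) = z} \<inter> {t. fst (snd t) = y}) / measure_pmf.prob P {t. fst t = x \<and> snd (snd t) = z}\<bar>}"
      unfolding E3_def p cntXYZ_def cntXZ_def pXYZ_def pXZ_def AB by auto
    then have "measure_pmf.prob M (E3 p) \<le> measure_pmf.prob M {\<omega>. card {n\<in>{1..N}. \<omega> n \<in> {t. fst t = x \<and> snd (snd t) = z}} > 0 \<and>
          sqrt (L / (2 * real (card {n\<in>{1..N}. \<omega> n \<in> {t. fst t = x \<and> snd (snd t) = z}}))) <
          \<bar>real (card {n\<in>{1..N}. \<omega> n \<in> {t. fst t = x \<and> snd (snd t) = z} \<inter> {t. fst (snd t) = y}}) / real (card {n\<in>{1..N}. \<omega> n \<in> {t. fst t = x \<and> snd (snd t) = z}})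
            - measure_pmf.prob P ({t. fst t = x \<and> snd (snd t) = z} \<inter> {t. fst (snd t) = y}) / measure_pmf.prob P {t. fst t = x \<and> snd (snd t) = z}\<bar>}"
      by (rule measure_pmf.finite_measure_mono) auto
    also have "\<dots> \<le> 2 * exp (-L)"
      unfolding M_def by (rule key) (use L0 prob_pos[OF pos, of "(x, y, z)"] in auto)
    finally show ?thesis .
  qed
  define U where "U = (\<Union>x. E1 x) \<union> (\<Union>z. E2 z) \<union> (\<Union>p. E3 p)"
  have U1: "measure_pmf.prob M (\<Union>x. E1 x) \<le> real CARD('x) * (2 * exp (-L))"
  proof -
    have "measure_pmf.prob M (\<Union>x. E1 x) \<le> (\<Sum>x\<in>UNIV. measure_pmf.prob M (E1 x))"
      by (rule measure_pmf.finite_measure_subadditive_finite) auto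
    also have "\<dots> \<le> (\<Sum>x\<in>(UNIV::'x set). 2 * exp (-L))" by (intro sum_mono P1)
    finally show ?thesis by simp
  qed
  have U2: "measure_pmf.prob M (\<Union>z. E2 z) \<le> real CARD('z) * (2 * exp (-L))"
  proof -
    have "measure_pmf.prob M (\<Union>z. E2 z) \<le> (\<Sum>z\<in>UNIV. measure_pmf.prob M (E2 z))"
      by (rule measure_pmf.finite_measure_subadditive_finite) auto
    also have "\<dots> \<le> (\<Sum>z\<in>(UNIV::'z set). 2 * exp (-L))" by (intro sum_mono P2)
    finally show ?thesis by simp
  qed
  have U3: "measure_pmf.prob M (\<Union>p. E3 p) \<le> real (CARD('x) * CARD('z)) * (2 * exp (-L))"
  proof -
    have "measure_pmf.prob M (\<Union>p. E3 p) \<le> (\<Sum>p\<in>UNIV. measure_pmf.prob M (E3 p))"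
      by (rule measure_pmf.finite_measure_subadditive_finite) auto
    also have "\<dots> \<le> (\<Sum>p\<in>(UNIV::('x \<times> 'z) set). 2 * exp (-L))" by (intro sum_mono P3)
    also have "\<dots> = real (CARD('x \<times> 'z)) * (2 * exp (-L))" by simp
    also have "CARD('x \<times> 'z) = CARD('x) * CARD('z)"
      by (simp add: card_cartesian_product flip: UNIV_Times_UNIV)
    finally show ?thesis by simp
  qed
  have PU: "measure_pmf.prob M U \<le> \<delta>"
  proof -
    have "measure_pmf.prob M U \<le> measure_pmf.prob M ((\<Union>x. E1 x) \<union> (\<Union>z. E2 z)) + measure_pmf.prob M (\<Union>p. E3 p)"
      unfolding U_def by (rule measure_Un_le) auto
    also have "measure_pmf.prob M ((\<Union>x. E1 x) \<union> (\<Union>z. E2 z)) \<le> measure_pmf.prob M (\<Union>x. E1 x) + measure_pmf.prob M (\<Union>z. E2 z)"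
      by (rule measure_Un_le) auto
    finally have "measure_pmf.prob M U \<le> real CARD('x) * (2 * exp (-L)) + real CARD('z) * (2 * exp (-L)) + real (CARD('x) * CARD('z)) * (2 * exp (-L))"
      using U1 U2 U3 by linarith
    also have "\<dots> = real K * (2 * exp (-L))" unfolding K_def by (simp add: algebra_simps)
    also have "\<dots> = \<delta>" using expL K3 by simp
    finally show ?thesis .
  qed
  have GU: "UNIV - G \<subseteq> U"
  proof
    fix \<omega> assume "\<omega> \<in> UNIV - G"
    then have nG: "\<omega> \<notin> G" by simp
    show "\<omega> \<in> U"
    proof (rule ccontr)
      assume "\<omega> \<notin> U"
      then have h1: "\<bar>real (cntX N \<omega> x) / real N - pX P x\<bar> \<le> sqrt (L / (2 * real N))" for x
        unfolding U_def E1_def by (auto simp: not_less)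
      from \<open>\<omega> \<notin> U\<close> have h2: "\<bar>real (cntXZ N \<omega> xt z) / real (cntX N \<omega> xt) - pXZ P xt z / pX P xt\<bar> \<le> sqrt (L / (2 * real (cntX N \<omega> xt)))"
        if "cntX N \<omega> xt > 0" for z
        using that unfolding U_def E2_def by (auto simp: not_less)
      from \<open>\<omega> \<notin> U\<close> have h3: "\<bar>real (cntXYZ N \<omega> x y z) / real (cntXZ N \<omega> x z) - pXYZ P x y z / pXZ P x z\<bar> \<le> sqrt (L / (2 * real (cntXZ N \<omega> x z)))"
        if "cntXZ N \<omega> x z > 0" for x z
        using that unfolding U_def E3_def by (fastforce simp: not_less)
      have "\<omega> \<in> G"
      proof (cases "cntX N \<omega> xt = 0 \<or> (\<exists>x z. cntXZ N \<omega> x z = 0)")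
        case True
        then have "hwidth \<delta> N \<omega> xt = \<infinity>" unfolding hwidth_def Let_def by auto
        then show ?thesis unfolding G_def by simp
      next
        case F2: False
        define h where "h = real (CARD('x) * CARD('z)) * sqrt (L / (2 * real N))
                   + real (CARD('x) * CARD('z)) * sqrt (L / (2 * real (cntX N \<omega> xt)))
                   + (\<Sum>(x, z)\<in>UNIV. sqrt (L / (2 * real (cntXZ N \<omega> x z))))"
        have hw: "hwidth \<delta> N \<omega> xt = ereal h"
          unfolding hwidth_def Let_def K_def[symmetric] L_def[symmetric] h_def using F2 N by simp
        have bound: "\<bar>est_m N \<omega> xt y - frontdoor P xt y\<bar> \<le> h"
proof -
          have cX: "cntX N \<omega> xt > 0" using F2 by auto
          have nz: "0 \<le> pXZ P x z" for x z by (simp add: pXZ_def)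
          have r1: "0 \<le> pXZ P xt z / pX P xt \<and> pXZ P xt z / pX P xt \<le> 1 \<and>
              0 \<le> real (cntXZ N \<omega> xt z) / real (cntX N \<omega> xt) \<and> real (cntXZ N \<omega> xt z) / real (cntX N \<omega> xt) \<le> 1" for z
            using ratio01[OF nz[of xt z] pop_facts(1)[of P xt z]] ratio01[of "real (cntXZ N \<omega> xt z)" "real (cntX N \<omega> xt)"]
              cnt_facts(1)[of N \<omega> xt z] by simp
          have r2: "0 \<le> pXYZ P x y z / pXZ P x z \<and> pXYZ P x y z / pXZ P x z \<le> 1 \<and>
              0 \<le> real (cntXYZ N \<omega> x y z) / real (cntXZ N \<omega> x z) \<and> real (cntXYZ N \<omega> x y z) / real (cntXZ N \<omega> x z) \<le> 1" for x z
            using ratio01[OF pop_facts(3)[of P x y z] pop_facts(2)[of P x y z]] ratio01[of "real (cntXYZ N \<omega> x y z)" "real (cntXZ N \<omega> x z)"]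
              cnt_facts(2)[of N \<omega> x y z] by simp
          have r3: "0 \<le> pX P x \<and> pX P x \<le> 1 \<and>
              0 \<le> real (cntX N \<omega> x) / real N \<and> real (cntX N \<omega> x) / real N \<le> 1" for x
            using pop_facts(4,5)[of P x] ratio01[of "real (cntX N \<omega> x)" "real N"]
              cnt_facts(3)[of N \<omega> x] by simp
          have e2: "\<bar>real (cntXZ N \<omega> xt z) / real (cntX N \<omega> xt) - pXZ P xt z / pX P xt\<bar> \<le> sqrt (L / (2 * real (cntX N \<omega> xt)))" for z
            using h2[OF cX] .
          have e3: "\<bar>real (cntXYZ N \<omega> x y z) / real (cntXZ N \<omega> x z) - pXYZ P x y z / pXZ P x z\<bar> \<le> sqrt (L / (2 * real (cntXZ N \<omega> x z)))" for x z
            using F2 by (intro h3) auto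
          show ?thesis unfolding est_m_def frontdoor_def h_def
            by (rule sum_err[where ah = "\<lambda>z. real (cntXZ N \<omega> xt z) / real (cntX N \<omega> xt)"
                and a = "\<lambda>z. pXZ P xt z / pX P xt"
                and bh = "\<lambda>x z. real (cntXYZ N \<omega> x y z) / real (cntXZ N \<omega> x z)"
                and b = "\<lambda>x z. pXYZ P x y z / pXZ P x z"
                and ch = "\<lambda>x. real (cntX N \<omega> x) / real N" and c = "\<lambda>x. pX P x"
                and e = "\<lambda>x z. sqrt (L / (2 * real (cntXZ N \<omega> x z)))"
                and ea = "sqrt (L / (2 * real (cntX N \<omega> xt)))" and eN = "sqrt (L / (2 * real N))"])
              (use r1 r2 r3 e2 e3 h1 in auto)
        qed
        have "ereal (est_m N \<omega> xt y) - ereal h \<le> ereal (frontdoor P xt y) \<and>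
              ereal (frontdoor P xt y) \<le> ereal (est_m N \<omega> xt y) + ereal h"
          using bound by (simp add: abs_le_iff)
        then show ?thesis unfolding G_def using hw by simp
      qed
      with nG show False by simp
    qed
  qed
  have c1: "measure_pmf.prob M G = 1 - measure_pmf.prob M (UNIV - G)"
    using measure_pmf.prob_compl[of G M] by simp
  have c2: "measure_pmf.prob M (UNIV - G) \<le> measure_pmf.prob M U"
    using GU by (intro measure_pmf.finite_measure_mono) auto
  have "measure_pmf.prob M G \<ge> 1 - \<delta>" using c1 c2 PU by linarith
  then show ?thesis unfolding M_def G_def .
qed

end
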